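(* Let $X$, $P$ (irreducible, row-stochastic), $\Sigma$, $\mu$, $\{A_i\}_{i\in X}$ be as in the context, with $\{A_i\}$ projectively uniformly hyperbolic with respect to $\Sigma$ and a multicone fixed; let $R$, $Q$, a recurrent class $C$, $\Sigma_C$, $\pi$ and $\mu_C$ be as in the context. Define $\vartheta:\Sigma_C\to\Sigma$ by $\vartheta((r_n)_{n\ge0})=(\tau(r_n))_{n\ge0}$. Then $\vartheta$ is surjective and $\vartheta_*\mu_C=\mu$.
   Context: $X$ finite; $P$ row-stochastic and irreducible; $\Sigma=\{x\in X^{\mathbb N_0}:P_{x_nx_{n+1}}>0\ \forall n\}$; $p$ the stationary probability vector; $\mu$ the Markov measure with $\mu([i_0,\dots,i_n])=p_{i_0}P_{i_0i_1}\cdots P_{i_{n-1}i_n}$. Projective uniform hyperbolicity: on $\widehat\Sigma=\{(x_n)_{n\in\mathbb Z}:P_{x_nx_{n+1}}>0\}$ with left shift $\widehat\sigma$ there is a continuous splitting $\mathbb R^2=E^d(\hat x)\oplus E^w(\hat x)$ into lines with $A_{x_0}E^*(\hat x)=E^*(\widehat\sigma\hat x)$ ($*=d,w$) and $n\ge1$ with $\|A_{x_{n-1}}\cdots A_{x_0}|_{E^w(\hat x)}\|<\|A_{x_{n-1}}\cdots A_{x_0}|_{E^d(\hat x)}\|$ for all $\hat x$. A multicone is a family $\{M_i\}$ of non-empty proper subsets of $\mathbb{RP}^1$, each a finite union of open intervals, with $\overline{[A_j](M_i)}\subset M_j$ whenever $P_{ij}>0$ ($[A]$ the projective action). Write $M_i=\bigsqcup_{a=1}^{m(i)}M_{i,a}$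 (components); for $P_{ij}>0$ let $\beta(i,a,j)$ be the unique $b$ with $[A_j](\overline{M_{i,a}})\subset M_{j,b}$. $R=\{((i,a),(j,b)):P_{ij}>0,\ 1\le a\le m(i),\ b=\beta(i,a,j)\}$, and for $r=((i,a),(j,b))$: $s(r)=(i,a)$, $t(r)=(j,b)$, $\tau(r)=j$. $Q_{r,r'}=P_{\tau(r)\tau(r')}$ if $t(r)=s(r')$, $0$ otherwise. A recurrent class is $C\subset R$ with $Q|_C$ irreducible and ($r\in C$, $Q_{r,r'}>0\Rightarrow r'\in C$). $\Sigma_C=\{(r_n)\in C^{\mathbb N_0}:Q_{r_nr_{n+1}}>0\}$, $\pi$ the stationary probability vector of $Q|_C$, $\mu_C$ the corresponding Markov measure on $\Sigma_C$. *)

theory Defs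
  imports "HOL-Probability.Probability"
begin

definition row_stochastic :: "('x::finite \<Rightarrow> 'x \<Rightarrow> real) \<Rightarrow> bool" where
  "row_stochastic P \<longleftrightarrow> (\<forall>i j. 0 \<le> P i j) \<and> (\<forall>i. (\<Sum>j\<in>UNIV. P i j) = 1)"

definition irreducible_on :: "'a set \<Rightarrow> ('a \<Rightarrow> 'a \<Rightarrow> real) \<Rightarrow> bool" where
  "irreducible_on I T \<longleftrightarrow> I \<noteq> {} \<and>
     (\<forall>i\<in>I. \<forall>j\<in>I. (i, j) \<in> {(a, b). a \<in> I \<and> b \<in> I \<and> 0 < T a b}\<^sup>+)"

definition stationary_prob :: "'a set \<Rightarrow> ('a \<Rightarrow> 'a \<Rightarrow> real) \<Rightarrow> ('a \<Rightarrow> real) \<Rightarrow> bool" where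
  "stationary_prob I T q \<longleftrightarrow> (\<forall>i\<in>I. 0 \<le> q i) \<and> (\<Sum>i\<in>I. q i) = 1 \<and>
     (\<forall>j\<in>I. q j = (\<Sum>i\<in>I. q i * T i j))"

definition shift_space :: "'a set \<Rightarrow> ('a \<Rightarrow> 'a \<Rightarrow> real) \<Rightarrow> (nat \<Rightarrow> 'a) set" where
  "shift_space I T = {x. \<forall>n. x n \<in> I \<and> 0 < T (x n) (x (Suc n))}"

definition shift_mspace :: "'a set \<Rightarrow> ('a \<Rightarrow> 'a \<Rightarrow> real) \<Rightarrow> (nat \<Rightarrow> 'a) measure" where
  "shift_mspace I T = restrict_space (PiM UNIV (\<lambda>_::nat. count_space UNIV)) (shift_space I T)"

definition cylinder :: "'a set \<Rightarrow> ('a \<Rightarrow> 'a \<Rightarrow> real) \<Rightarrow> 'a list \<Rightarrow> (nat \<Rightarrow> 'a) set" where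
  "cylinder I T w = {x \<in> shift_space I T. \<forall>k<length w. x k = w ! k}"

definition markov_measure ::
  "'a set \<Rightarrow> ('a \<Rightarrow> 'a \<Rightarrow> real) \<Rightarrow> ('a \<Rightarrow> real) \<Rightarrow> (nat \<Rightarrow> 'a) measure \<Rightarrow> bool" where
  "markov_measure I T q m \<longleftrightarrow> sets m = sets (shift_mspace I T) \<and>
     (\<forall>w. w \<noteq> [] \<and> set w \<subseteq> I \<longrightarrow>
        emeasure m (cylinder I T w) =
          ennreal (q (w ! 0) * (\<Prod>k<length w - 1. T (w ! k) (w ! Suc k))))"

text \<open>We model RP^1 as the unit circle in the complex plane: the line spanned by
  v = (cos t, sin t) corresponds to exp(2 i t).  The quotient map R^2 - {0} \<rightarrow> RP^1 is:\<close>
definition line_pt :: "real^2 \<Rightarrow> complex" where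
  "line_pt v = (Complex (v$1) (v$2))\<^sup>2 / (complex_of_real (norm v))\<^sup>2"

abbreviation RP1 :: "complex set" where
  "RP1 \<equiv> sphere 0 1"

definition rep :: "complex \<Rightarrow> real^2" where
  "rep z = (SOME v. v \<noteq> 0 \<and> line_pt v = z)"

definition projact :: "real^2^2 \<Rightarrow> complex \<Rightarrow> complex" where
  "projact A z = line_pt (A *v rep z)"

definition restr_norm :: "real^2^2 \<Rightarrow> complex \<Rightarrow> real" where
  "restr_norm A z = norm (A *v rep z) / norm (rep z)"

primrec mprod :: "('x \<Rightarrow> real^2^2) \<Rightarrow> 'x list \<Rightarrow> real^2^2" where
  "mprod A [] = mat 1"
| "mprod A (a # as) = mprod A as ** A a"

definition bi_shift_space :: "('x \<Rightarrow> 'x \<Rightarrow> real) \<Rightarrow> (int \<Rightarrow> 'x) set" where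
  "bi_shift_space P = {x. \<forall>n. 0 < P (x n) (x (n + 1))}"

definition bi_shift_top :: "('x \<Rightarrow> 'x \<Rightarrow> real) \<Rightarrow> (int \<Rightarrow> 'x) topology" where
  "bi_shift_top P = subtopology (product_topology (\<lambda>_::int. discrete_topology UNIV) UNIV)
                                (bi_shift_space P)"

definition proj_unif_hyp :: "('x \<Rightarrow> 'x \<Rightarrow> real) \<Rightarrow> ('x \<Rightarrow> real^2^2) \<Rightarrow> bool" where
  "proj_unif_hyp P A \<longleftrightarrow>
     (\<exists>Ed Ew :: (int \<Rightarrow> 'x) \<Rightarrow> complex. \<exists>n::nat.
        continuous_map (bi_shift_top P) euclidean Ed \<and>
        continuous_map (bi_shift_top P) euclidean Ew \<and>
        n \<ge> 1 \<and>
        (\<forall>x\<in>bi_shift_space P.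
           Ed x \<in> RP1 \<and> Ew x \<in> RP1 \<and> Ed x \<noteq> Ew x \<and>
           projact (A (x 0)) (Ed x) = Ed (\<lambda>k. x (k + 1)) \<and>
           projact (A (x 0)) (Ew x) = Ew (\<lambda>k. x (k + 1)) \<and>
           restr_norm (mprod A (map (\<lambda>k. x (int k)) [0..<n])) (Ew x)
             < restr_norm (mprod A (map (\<lambda>k. x (int k)) [0..<n])) (Ed x)))"

definition open_interval_RP1 :: "complex set \<Rightarrow> bool" where
  "open_interval_RP1 J \<longleftrightarrow> J \<noteq> {} \<and> J \<subset> RP1 \<and> connected J \<and> openin (top_of_set RP1) J"

definition multicone :: "('x \<Rightarrow> 'x \<Rightarrow> real) \<Rightarrow> ('x \<Rightarrow> real^2^2) \<Rightarrow> ('x \<Rightarrow> complex set) \<Rightarrow> bool" where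
  "multicone P A M \<longleftrightarrow>
     (\<forall>i. M i \<noteq> {} \<and> M i \<subset> RP1 \<and>
          (\<exists>F. finite F \<and> (\<forall>J\<in>F. open_interval_RP1 J) \<and> M i = \<Union>F)) \<and>
     (\<forall>i j. 0 < P i j \<longrightarrow> closure (projact (A j) ` M i) \<subseteq> M j)"

text \<open>Components M_(i,a) are represented by the components themselves (as sets);
  beta(i,a,j) is the unique component M_(j,b) containing [A_j](closure M_(i,a)).\<close>
definition beta :: "('x \<Rightarrow> real^2^2) \<Rightarrow> ('x \<Rightarrow> complex set) \<Rightarrow> 'x \<Rightarrow> complex set \<Rightarrow> 'x \<Rightarrow> complex set" where
  "beta A M i K j = (THE K'. K' \<in> components (M j) \<and> projact (A j) ` closure K \<subseteq> K')"

type_synonym 'x node = "'x \<times> complex set"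
type_synonym 'x edge = "'x node \<times> 'x node"

definition Redges :: "('x \<Rightarrow> 'x \<Rightarrow> real) \<Rightarrow> ('x \<Rightarrow> real^2^2) \<Rightarrow> ('x \<Rightarrow> complex set) \<Rightarrow> 'x edge set" where
  "Redges P A M = {((i, K), (j, K')). 0 < P i j \<and> K \<in> components (M i) \<and> K' = beta A M i K j}"

definition tau :: "'x edge \<Rightarrow> 'x" where
  "tau r = fst (snd r)"

definition Qmat :: "('x \<Rightarrow> 'x \<Rightarrow> real) \<Rightarrow> 'x edge \<Rightarrow> 'x edge \<Rightarrow> real" where
  "Qmat P r r' = (if snd r = fst r' then P (tau r) (tau r') else 0)"

definition recurrent_class ::
  "('x \<Rightarrow> 'x \<Rightarrow> real) \<Rightarrow> ('x \<Rightarrow> real^2^2) \<Rightarrow> ('x \<Rightarrow> complex set) \<Rightarrow> 'x edge set \<Rightarrow> bool" where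
  "recurrent_class P A M C \<longleftrightarrow> C \<subseteq> Redges P A M \<and> irreducible_on C (Qmat P) \<and>
     (\<forall>r\<in>C. \<forall>r'\<in>Redges P A M. 0 < Qmat P r r' \<longrightarrow> r' \<in> C)"

definition vartheta :: "(nat \<Rightarrow> 'x edge) \<Rightarrow> (nat \<Rightarrow> 'x)" where
  "vartheta r = (\<lambda>n. tau (r n))"

end

theory Submission
  imports Defs
begin

definition stepE :: "('x \<Rightarrow> real^2^2) \<Rightarrow> ('x \<Rightarrow> complex set) \<Rightarrow> 'x edge \<Rightarrow> 'x \<Rightarrow> 'x edge" where
  "stepE A M e j = (snd e, (j, beta A M (fst (snd e)) (snd (snd e)) j))"

lemma tau_stepE[simp]: "tau (stepE A M e j) = j" and fst_stepE[simp]: "fst (stepE A M e j) = snd e"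
  by (simp_all add: stepE_def tau_def)

lemma Redges_shape:
  assumes "r \<in> Redges P A M" "snd e = fst r"
  shows "r = stepE A M e (tau r)"
  using assms by (auto simp: Redges_def stepE_def tau_def)

lemma Qmat_pos: "0 < Qmat P r r' \<Longrightarrow> snd r = fst r' \<and> 0 < P (tau r) (tau r')"
  by (auto simp: Qmat_def split: if_splits)

lemma succ_in_C:
  assumes rc: "recurrent_class P A M C" and r: "r \<in> C" and pos: "0 < P (tau r) j"
  shows "stepE A M r j \<in> C"
proof -
  have irr: "irreducible_on C (Qmat P)" and sub: "C \<subseteq> Redges P A M"
    and cl: "\<forall>r\<in>C. \<forall>r'\<in>Redges P A M. 0 < Qmat P r r' \<longrightarrow> r' \<in> C"
    using rc by (auto simp: recurrent_class_def)
  have "(r, r) \<in> {(a, b). a \<in> C \<and> b \<in> C \<and> 0 < Qmat P a b}\<^sup>+"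
    using irr r by (auto simp: irreducible_on_def)
  then obtain r1 where "(r, r1) \<in> {(a, b). a \<in> C \<and> b \<in> C \<and> 0 < Qmat P a b}"
    by (metis (no_types, lifting) converse_tranclE)
  then have r1: "r1 \<in> C" "0 < Qmat P r r1" by auto
  then have e: "snd r = fst r1" using Qmat_pos by blast
  from r1 sub have "r1 \<in> Redges P A M" by auto
  then have comp: "snd (fst r1) \<in> components (M (fst (fst r1)))"
    by (auto simp: Redges_def)
  obtain i K where iK: "fst r1 = (i, K)" by (cases "fst r1")
  have st: "stepE A M r j = ((i,K),(j, beta A M i K j))" using e iK by (simp add: stepE_def)
  have "stepE A M r j \<in> Redges P A M"
    unfolding st using comp e pos iK by (simp add: Redges_def tau_def)
  moreover have "0 < Qmat P r (stepE A M r j)" using pos by (simp add: Qmat_def)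
  ultimately show ?thesis using cl r by blast
qed

lemma shiftC_step:
  assumes rc: "recurrent_class P A M C" and x: "x \<in> shift_space C (Qmat P)"
  shows "x (Suc k) = stepE A M (x k) (tau (x (Suc k)))" "0 < P (tau (x k)) (tau (x (Suc k)))"
    "x k \<in> C"
proof -
  have "x k \<in> C" "x (Suc k) \<in> C" "0 < Qmat P (x k) (x (Suc k))" using x by (auto simp: shift_space_def)
  moreover have "C \<subseteq> Redges P A M" using rc by (auto simp: recurrent_class_def)
  ultimately show "x (Suc k) = stepE A M (x k) (tau (x (Suc k)))" "0 < P (tau (x k)) (tau (x (Suc k)))"
    "x k \<in> C"
    using Redges_shape Qmat_pos by blast+
qed

lemma reach_C:
  assumes rc: "recurrent_class P A M C" and r: "r \<in> C"
    and "(tau r, j) \<in> {(a, b). a \<in> UNIV \<and> b \<in> UNIV \<and> 0 < P a b}\<^sup>+"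
  shows "\<exists>r'\<in>C. tau r' = j"
  using assms(3)
proof (induction rule: trancl_induct)
  case (base y) then show ?case using succ_in_C[OF rc r] by (intro bexI[of _ "stepE A M r y"]) auto
next
  case (step y z)
  then obtain r' where "r' \<in> C" "tau r' = y" by auto
  then show ?case using succ_in_C[OF rc, of r' z] step by (intro bexI[of _ "stepE A M r' z"]) auto
qed

lemma exists_C_tau:
  assumes rc: "recurrent_class P A M C" and irr: "irreducible_on UNIV P"
  shows "\<exists>r\<in>C. tau r = j"
proof -
  have "C \<noteq> {}" using rc by (auto simp: recurrent_class_def irreducible_on_def)
  then obtain r where r: "r \<in> C" by auto
  show ?thesis
    using reach_C[OF rc r] irr by (auto simp: irreducible_on_def)
qed

primrec liftseq :: "('x \<Rightarrow> real^2^2) \<Rightarrow> ('x \<Rightarrow> complex set) \<Rightarrow> 'x edge set \<Rightarrow> (nat \<Rightarrow> 'x) \<Rightarrow> nat \<Rightarrow> 'x edge" where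
  "liftseq A M C x 0 = (SOME r. r \<in> C \<and> tau r = x 0)"
| "liftseq A M C x (Suc n) = stepE A M (liftseq A M C x n) (x (Suc n))"

lemma surj_part:
  assumes rc: "recurrent_class P A M C" and irr: "irreducible_on UNIV P"
  shows "vartheta ` shift_space C (Qmat P) = shift_space UNIV P"
proof
  show "vartheta ` shift_space C (Qmat P) \<subseteq> shift_space UNIV P"
    using shiftC_step(2)[OF rc] by (auto simp: shift_space_def vartheta_def)
next
  show "shift_space UNIV P \<subseteq> vartheta ` shift_space C (Qmat P)"
  proof
    fix x assume x: "x \<in> shift_space UNIV P"
    let ?y = "liftseq A M C x"
    have y: "?y n \<in> C \<and> tau (?y n) = x n" for n
    proof (induction n)
      case 0
      have "\<exists>r. r \<in> C \<and> tau r = x 0" using exists_C_tau[OF rc irr, of "x 0"] by auto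
      from someI_ex[OF this] show ?case by simp
    next
      case (Suc n)
      then show ?case using succ_in_C[OF rc, of "?y n" "x (Suc n)"] x by (auto simp: shift_space_def)
    qed
    have "?y \<in> shift_space C (Qmat P)"
      using y x by (auto simp: shift_space_def Qmat_def)
    moreover have "vartheta ?y = x" using y by (auto simp: vartheta_def)
    ultimately show "x \<in> vartheta ` shift_space C (Qmat P)" by (metis image_eqI)
  qed
qed

lemma stat_aux:
  fixes P :: "'x::finite \<Rightarrow> 'x \<Rightarrow> real" and d :: "'x \<Rightarrow> real"
  assumes rs: "row_stochastic P" and irr: "irreducible_on UNIV P"
    and inv: "\<And>j. d j = (\<Sum>i\<in>UNIV. d i * P i j)" and s0: "(\<Sum>i\<in>UNIV. d i) = 0"
  shows "d i0 \<le> 0"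
proof (rule ccontr)
  assume "\<not> d i0 \<le> 0"
  define S where "S = {i. 0 < d i}"
  have i0S: "i0 \<in> S" using \<open>\<not> d i0 \<le> 0\<close> by (simp add: S_def)
  have Pnn: "\<And>i j. 0 \<le> P i j" and Psum: "\<And>i. (\<Sum>j\<in>UNIV. P i j) = 1"
    using rs by (auto simp: row_stochastic_def)
  define PS where "PS i = (\<Sum>j\<in>S. P i j)" for i
  have PS0: "0 \<le> PS i" for i unfolding PS_def by (intro sum_nonneg) (simp add: Pnn)
  have PS1: "PS i \<le> 1" for i
  proof -
    have "PS i \<le> (\<Sum>j\<in>UNIV. P i j)" unfolding PS_def by (intro sum_mono2) (auto simp: Pnn)
    then show ?thesis using Psum by simp
  qed
  have "(\<Sum>j\<in>S. d j) = (\<Sum>j\<in>S. \<Sum>i\<in>UNIV. d i * P i j)" by (rule sum.cong[OF refl]) (rule inv)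
  also have "\<dots> = (\<Sum>i\<in>UNIV. d i * PS i)"
    unfolding PS_def by (subst sum.swap) (simp add: sum_distrib_left)
  also have "\<dots> \<le> (\<Sum>i\<in>UNIV. if i \<in> S then d i * PS i else 0)"
    by (intro sum_mono) (auto simp: S_def PS0 mult_nonpos_nonneg)
  also have "\<dots> = (\<Sum>i\<in>S. d i * PS i)" by (simp add: sum.If_cases)
  finally have le: "(\<Sum>j\<in>S. d j) \<le> (\<Sum>i\<in>S. d i * PS i)" .
  have "(\<Sum>i\<in>S. d i * (1 - PS i)) = (\<Sum>j\<in>S. d j) - (\<Sum>i\<in>S. d i * PS i)"
    by (simp add: right_diff_distrib sum_subtractf)
  then have le0: "(\<Sum>i\<in>S. d i * (1 - PS i)) \<le> 0" using le by linarith
  moreover have nn: "\<forall>i\<in>S. 0 \<le> d i * (1 - PS i)" using PS1 by (auto simp: S_def)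
  ultimately have "(\<Sum>i\<in>S. d i * (1 - PS i)) = 0" 
  proof -
    have "0 \<le> (\<Sum>i\<in>S. d i * (1 - PS i))" using nn by (intro sum_nonneg) auto
    with le0 show ?thesis by linarith
  qed
  then have "\<forall>i\<in>S. d i * (1 - PS i) = 0" using nn by (simp add: sum_nonneg_eq_0_iff)
  then have PSe: "\<And>i. i \<in> S \<Longrightarrow> PS i = 1" by (auto simp: S_def)
  have closed: "j \<in> S" if "i \<in> S" "0 < P i j" for i j
  proof (rule ccontr)
    assume "j \<notin> S"
    have "(\<Sum>k\<in>UNIV. P i k) = PS i + (\<Sum>k\<in>-S. P i k)"
      unfolding PS_def using sum.union_disjoint[of S "-S" "P i"] by (simp add: Un_commute)
    then have "(\<Sum>k\<in>-S. P i k) = 0" using Psum PSe[OF \<open>i \<in> S\<close>] by simp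
    then have "\<forall>k\<in>-S. P i k = 0" by (simp add: sum_nonneg_eq_0_iff Pnn)
    then show False using \<open>j \<notin> S\<close> \<open>0 < P i j\<close> by auto
  qed
  have allS: "j \<in> S" for j
  proof -
    have "(i0, j) \<in> {(a, b). a \<in> UNIV \<and> b \<in> UNIV \<and> 0 < P a b}\<^sup>+"
      using irr by (auto simp: irreducible_on_def)
    then show ?thesis
      by (induction rule: trancl_induct) (use i0S closed in auto)
  qed
  have "0 < (\<Sum>i\<in>UNIV. d i)"
    by (intro sum_pos) (use allS in \<open>auto simp: S_def\<close>)
  then show False using s0 by simp
qed

lemma stat_unique:
  fixes P :: "'x::finite \<Rightarrow> 'x \<Rightarrow> real"
  assumes rs: "row_stochastic P" and irr: "irreducible_on UNIV P"
    and p: "stationary_prob UNIV P p" and q: "stationary_prob UNIV P q"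
  shows "p = q"
proof -
  have p1: "\<And>j. p j = (\<Sum>i\<in>UNIV. p i * P i j)" and p2: "(\<Sum>i\<in>UNIV. p i) = 1"
    using p unfolding stationary_prob_def by blast+
  have q1: "\<And>j. q j = (\<Sum>i\<in>UNIV. q i * P i j)" and q2: "(\<Sum>i\<in>UNIV. q i) = 1"
    using q unfolding stationary_prob_def by blast+
  have e: "(\<Sum>i\<in>UNIV. (p i - q i) * P i j) = (\<Sum>i\<in>UNIV. p i * P i j) - (\<Sum>i\<in>UNIV. q i * P i j)" for j
    by (simp add: sum_subtractf left_diff_distrib)
  have e2: "(\<Sum>i\<in>UNIV. (q i - p i) * P i j) = (\<Sum>i\<in>UNIV. q i * P i j) - (\<Sum>i\<in>UNIV. p i * P i j)" for j
    by (simp add: sum_subtractf left_diff_distrib)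
  have a: "p i - q i \<le> 0" for i
  proof (rule stat_aux[OF rs irr])
    show "\<And>j. p j - q j = (\<Sum>i\<in>UNIV. (p i - q i) * P i j)" using p1 q1 e by metis
    show "(\<Sum>i\<in>UNIV. p i - q i) = 0" using p2 q2 by (simp add: sum_subtractf)
  qed
  have b: "q i - p i \<le> 0" for i
  proof (rule stat_aux[OF rs irr])
    show "\<And>j. q j - p j = (\<Sum>i\<in>UNIV. (q i - p i) * P i j)" using p1 q1 e2 by metis
    show "(\<Sum>i\<in>UNIV. q i - p i) = 0" using p2 q2 by (simp add: sum_subtractf)
  qed
  show ?thesis
  proof
    fix i show "p i = q i" using a[of i] b[of i] by linarith
  qed
qed

lemma fiber_sum:
  assumes rs: "row_stochastic P" and rc: "recurrent_class P A M C" and fin: "finite C" and r: "r \<in> C"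
  shows "(\<Sum>r'\<in>{r'\<in>C. tau r' = j}. Qmat P r r') = P (tau r) j"
proof -
  let ?s = "stepE A M r j"
  let ?F = "{r'\<in>C. tau r' = j}"
  have sub: "C \<subseteq> Redges P A M" using rc by (auto simp: recurrent_class_def)
  have pw: "Qmat P r r' = (if r' = ?s then P (tau r) j else 0)" if "r' \<in> ?F" for r'
  proof (cases "r' = ?s")
    case True then show ?thesis by (simp add: Qmat_def)
  next
    case False
    have "snd r \<noteq> fst r'"
    proof
      assume "snd r = fst r'"
      then have "r' = stepE A M r (tau r')" using Redges_shape[of r' P A M r] that sub by auto
      then show False using False that by auto
    qed
    then show ?thesis using False by (simp add: Qmat_def)
  qed
  have "(\<Sum>r'\<in>?F. Qmat P r r') = (\<Sum>r'\<in>?F. if r' = ?s then P (tau r) j else 0)"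
    using pw by (rule sum.cong[OF refl])
  also have "\<dots> = (if ?s \<in> ?F then P (tau r) j else 0)"
    using fin by (simp add: sum.delta)
  also have "\<dots> = P (tau r) j"
  proof (cases "0 < P (tau r) j")
    case True then show ?thesis using succ_in_C[OF rc r True] by simp
  next
    case False
    then have "P (tau r) j = 0" using rs by (auto simp: row_stochastic_def intro: antisym)
    then show ?thesis by simp
  qed
  finally show ?thesis .
qed

lemma q_stationary:
  fixes P :: "'x::finite \<Rightarrow> 'x \<Rightarrow> real"
  assumes rs: "row_stochastic P" and rc: "recurrent_class P A M C"
    and pis: "stationary_prob C (Qmat P) ppi"
  shows "stationary_prob UNIV P (\<lambda>j. \<Sum>r\<in>{r\<in>C. tau r = j}. ppi r)"
proof -
  have pnn: "\<And>i. i \<in> C \<Longrightarrow> 0 \<le> ppi i" and p1: "(\<Sum>i\<in>C. ppi i) = 1"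
    and pst: "\<And>j. j \<in> C \<Longrightarrow> ppi j = (\<Sum>i\<in>C. ppi i * Qmat P i j)"
    using pis unfolding stationary_prob_def by blast+
  have fin: "finite C" using p1 by (metis sum.infinite zero_neq_one)
  have grp: "(\<Sum>j\<in>UNIV. \<Sum>r\<in>{r\<in>C. tau r = j}. h r) = (\<Sum>r\<in>C. h r)" for h :: "'x edge \<Rightarrow> real"
    by (rule sum.group) (use fin in auto)
  have "(\<Sum>r\<in>{r\<in>C. tau r = j'}. ppi r) = (\<Sum>j\<in>UNIV. (\<Sum>r\<in>{r\<in>C. tau r = j}. ppi r) * P j j')" for j'
  proof -
    have "(\<Sum>r'\<in>{r\<in>C. tau r = j'}. ppi r') = (\<Sum>r'\<in>{r\<in>C. tau r = j'}. \<Sum>r\<in>C. ppi r * Qmat P r r')"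
      by (rule sum.cong[OF refl]) (rule pst, simp)
    also have "\<dots> = (\<Sum>r\<in>C. ppi r * (\<Sum>r'\<in>{r\<in>C. tau r = j'}. Qmat P r r'))"
      by (subst sum.swap) (simp add: sum_distrib_left)
    also have "\<dots> = (\<Sum>r\<in>C. ppi r * P (tau r) j')"
      using fiber_sum[OF rs rc fin] by (intro sum.cong) auto
    also have "\<dots> = (\<Sum>j\<in>UNIV. \<Sum>r\<in>{r\<in>C. tau r = j}. ppi r * P (tau r) j')"
      by (rule grp[symmetric])
    also have "\<dots> = (\<Sum>j\<in>UNIV. (\<Sum>r\<in>{r\<in>C. tau r = j}. ppi r) * P j j')"
      by (simp add: sum_distrib_right)
    finally show ?thesis .
  qed
  moreover have "(\<Sum>j\<in>UNIV. \<Sum>r\<in>{r\<in>C. tau r = j}. ppi r) = 1" using grp p1 by simp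
  moreover have "0 \<le> (\<Sum>r\<in>{r\<in>C. tau r = j}. ppi r)" for j by (intro sum_nonneg) (auto simp: pnn)
  ultimately show ?thesis unfolding stationary_prob_def by blast
qed

lemma space_PiM_UNIV: "space (PiM UNIV (\<lambda>_::nat. count_space (UNIV::'a set))) = UNIV"
  by (simp add: space_PiM)

lemma space_shift_mspace[simp]: "space (shift_mspace I T) = shift_space I T"
  by (simp add: shift_mspace_def space_restrict_space space_PiM_UNIV)

lemma pred_cyl: "{x. \<forall>k<length w. x k = w ! k} \<in> sets (PiM UNIV (\<lambda>_::nat. count_space (UNIV::'a set)))"
proof -
  have "{x. \<forall>k<length w. x k = w ! k} = {x \<in> space (PiM UNIV (\<lambda>_::nat. count_space (UNIV::'a set))). \<forall>k<length w. x k = w ! k}"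
    by (simp add: space_PiM_UNIV)
  also have "\<dots> \<in> sets (PiM UNIV (\<lambda>_::nat. count_space (UNIV::'a set)))"
    by measurable
  finally show ?thesis .
qed

lemma cyl_sets: "cylinder I T w \<in> sets (shift_mspace I T)"
proof -
  have "cylinder I T w = shift_space I T \<inter> {x. \<forall>k<length w. x k = w ! k}"
    by (auto simp: cylinder_def)
  then show ?thesis unfolding shift_mspace_def sets_restrict_space using pred_cyl by blast
qed

lemma shift_space_UNIV_sets:
  fixes P :: "'x::finite \<Rightarrow> 'x \<Rightarrow> real"
  shows "shift_space UNIV P \<in> sets (PiM UNIV (\<lambda>_::nat. count_space (UNIV::'x set)))"
proof -
  have "shift_space UNIV P = {x \<in> space (PiM UNIV (\<lambda>_::nat. count_space (UNIV::'x set))). \<forall>n. 0 < P (x n) (x (Suc n))}"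
    by (simp add: shift_space_def space_PiM_UNIV)
  also have "\<dots> \<in> sets (PiM UNIV (\<lambda>_::nat. count_space (UNIV::'x set)))"
    by measurable
  finally show ?thesis .
qed

lemma vartheta_meas_PiM:
  "vartheta \<in> measurable (PiM UNIV (\<lambda>_::nat. count_space (UNIV::'x edge set)))
                          (PiM UNIV (\<lambda>_::nat. count_space (UNIV::'x set)))"
proof -
  have "(\<lambda>r n. tau (r n)) \<in> measurable (PiM UNIV (\<lambda>_::nat. count_space (UNIV::'x edge set)))
                          (PiM UNIV (\<lambda>_::nat. count_space (UNIV::'x set)))"
    by (rule measurable_PiM_single') (auto intro!: measurable_compose[OF measurable_component_singleton])
  moreover have "(vartheta :: (nat \<Rightarrow> 'x edge) \<Rightarrow> _) = (\<lambda>r n. tau (r n))" by (intro ext) (simp add: vartheta_def)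
  ultimately show ?thesis by (simp only:)
qed

lemma cyl_int:
  assumes "length u \<le> length v"
  shows "cylinder I T u \<inter> cylinder I T v = (if \<forall>k<length u. u ! k = v ! k then cylinder I T v else {})"
  using assms by (auto simp: cylinder_def)

lemma sets_gen:
  fixes P :: "'x::finite \<Rightarrow> 'x \<Rightarrow> real"
  defines "\<Omega> \<equiv> shift_space UNIV P"
  defines "E \<equiv> {cylinder UNIV P w | w. True} \<union> {{}}"
  shows "sets (shift_mspace UNIV P) = sigma_sets \<Omega> E"
proof -
  let ?M = "PiM UNIV (\<lambda>_::nat. count_space (UNIV::'x set))"
  define G0 where "G0 = {{f::nat\<Rightarrow>'x. f i \<in> A} | i A. True}"
  have sM: "sets ?M = sigma_sets UNIV G0"
    unfolding sets_PiM_single G0_def by (simp add: space_PiM_UNIV[unfolded space_PiM])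
  have S1: "sets (shift_mspace UNIV P) = sigma_sets \<Omega> ((\<inter>) \<Omega> ` G0)"
    unfolding shift_mspace_def sets_restrict_space sM \<Omega>_def
    by (rule sigma_sets_Int) (use shift_space_UNIV_sets[of P] sM in auto)
  have EP: "E \<subseteq> Pow \<Omega>" by (auto simp: E_def \<Omega>_def cylinder_def)
  interpret sa: sigma_algebra \<Omega> "sigma_sets \<Omega> E" using EP by (rule sigma_algebra_sigma_sets)
  have "sigma_sets \<Omega> ((\<inter>) \<Omega> ` G0) = sigma_sets \<Omega> E"
  proof (rule sigma_sets_eqI)
    fix a assume "a \<in> (\<inter>) \<Omega> ` G0"
    then obtain i A where a: "a = \<Omega> \<inter> {f. f i \<in> A}" by (auto simp: G0_def)
    define W where "W = {w::'x list. length w = Suc i \<and> w ! i \<in> A}"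
    have finW: "finite W"
      by (rule finite_subset[OF _ finite_lists_length_eq[of "UNIV::'x set" "Suc i"]]) (auto simp: W_def)
    have "a = (\<Union>w\<in>W. cylinder UNIV P w)"
    proof (intro equalityI subsetI)
      fix x assume "x \<in> a"
      then have "x \<in> cylinder UNIV P (map x [0..<Suc i])" "map x [0..<Suc i] \<in> W"
        by (auto simp: a cylinder_def \<Omega>_def W_def simp del: upt_Suc)
      then show "x \<in> (\<Union>w\<in>W. cylinder UNIV P w)" by blast
    next
      fix x assume "x \<in> (\<Union>w\<in>W. cylinder UNIV P w)"
      then show "x \<in> a" by (auto simp: a cylinder_def \<Omega>_def W_def)
    qed
    also have "\<dots> \<in> sigma_sets \<Omega> E"
      using finW by (intro sa.finite_UN) (auto simp: E_def)
    finally show "a \<in> sigma_sets \<Omega> E" .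
  next
    fix b assume "b \<in> E"
    then show "b \<in> sigma_sets \<Omega> ((\<inter>) \<Omega> ` G0)"
      using cyl_sets[of UNIV P] S1 by (auto simp: E_def intro: sigma_sets.Empty)
  qed
  with S1 show ?thesis by simp
qed

primrec chainf :: "('x \<Rightarrow> real^2^2) \<Rightarrow> ('x \<Rightarrow> complex set) \<Rightarrow> 'x edge \<Rightarrow> 'x list \<Rightarrow> nat \<Rightarrow> 'x edge" where
  "chainf A M u w 0 = u"
| "chainf A M u w (Suc k) = stepE A M (chainf A M u w k) (w ! Suc k)"

lemma chain_props:
  assumes rc: "recurrent_class P A M C" and u: "u \<in> C" "tau u = w ! 0"
    and adm: "\<forall>k. Suc k < length w \<longrightarrow> 0 < P (w ! k) (w ! Suc k)"
  shows "k < length w \<Longrightarrow> chainf A M u w k \<in> C \<and> tau (chainf A M u w k) = w ! k"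
proof (induction k)
  case 0 then show ?case using u by simp
next
  case (Suc k)
  then have "chainf A M u w k \<in> C" "tau (chainf A M u w k) = w ! k" by auto
  then show ?case using succ_in_C[OF rc, of "chainf A M u w k" "w ! Suc k"] adm Suc.prems by auto
qed

lemma preimage:
  assumes rc: "recurrent_class P A M C"
    and adm: "\<forall>k. Suc k < length w \<longrightarrow> 0 < P (w ! k) (w ! Suc k)" and w: "w \<noteq> []"
  shows "vartheta -` cylinder UNIV P w \<inter> shift_space C (Qmat P)
    = (\<Union>u\<in>{r\<in>C. tau r = w ! 0}. cylinder C (Qmat P) (map (chainf A M u w) [0..<length w]))"
proof (intro equalityI subsetI)
  fix x assume x: "x \<in> vartheta -` cylinder UNIV P w \<inter> shift_space C (Qmat P)"
  then have xC: "x \<in> shift_space C (Qmat P)" and tx: "\<And>k. k < length w \<Longrightarrow> tau (x k) = w ! k"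
    by (auto simp: cylinder_def vartheta_def)
  have x0: "x 0 \<in> C" "tau (x 0) = w ! 0" using xC tx w by (auto simp: shift_space_def)
  have "k < length w \<Longrightarrow> x k = chainf A M (x 0) w k" for k
  proof (induction k)
    case 0 then show ?case by simp
  next
    case (Suc k)
    then show ?case using shiftC_step(1)[OF rc xC, of k] tx[of "Suc k"] by simp
  qed
  then have "x \<in> cylinder C (Qmat P) (map (chainf A M (x 0) w) [0..<length w])"
    using xC by (auto simp: cylinder_def)
  then show "x \<in> (\<Union>u\<in>{r\<in>C. tau r = w ! 0}. cylinder C (Qmat P) (map (chainf A M u w) [0..<length w]))"
    using x0 by blast
next
  fix x assume "x \<in> (\<Union>u\<in>{r\<in>C. tau r = w ! 0}. cylinder C (Qmat P) (map (chainf A M u w) [0..<length w]))"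
  then obtain u where u: "u \<in> C" "tau u = w ! 0"
    and x: "x \<in> cylinder C (Qmat P) (map (chainf A M u w) [0..<length w])" by auto
  then have xC: "x \<in> shift_space C (Qmat P)" and xk: "\<And>k. k < length w \<Longrightarrow> x k = chainf A M u w k"
    by (auto simp: cylinder_def)
  have "vartheta x \<in> shift_space UNIV P"
    using shiftC_step(2)[OF rc xC] by (auto simp: shift_space_def vartheta_def)
  moreover have "k < length w \<Longrightarrow> vartheta x k = w ! k" for k
    using xk chain_props[OF rc u adm] by (simp add: vartheta_def)
  ultimately show "x \<in> vartheta -` cylinder UNIV P w \<inter> shift_space C (Qmat P)"
    using xC by (auto simp: cylinder_def)
qed

lemma emeas_chain:
  assumes mC: "markov_measure C (Qmat P) ppi muC" and rc: "recurrent_class P A M C"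
    and u: "u \<in> C" "tau u = w ! 0"
    and adm: "\<forall>k. Suc k < length w \<longrightarrow> 0 < P (w ! k) (w ! Suc k)" and w: "w \<noteq> []"
  shows "emeasure muC (cylinder C (Qmat P) (map (chainf A M u w) [0..<length w]))
     = ennreal (ppi u * (\<Prod>k<length w - 1. P (w ! k) (w ! Suc k)))"
proof -
  let ?c = "chainf A M u w"
  have cp: "\<And>k. k < length w \<Longrightarrow> ?c k \<in> C \<and> tau (?c k) = w ! k" using chain_props[OF rc u adm] .
  have "set (map ?c [0..<length w]) \<subseteq> C" using cp by auto
  moreover have "map ?c [0..<length w] \<noteq> []" using w by simp
  ultimately have "emeasure muC (cylinder C (Qmat P) (map ?c [0..<length w]))
     = ennreal (ppi (map ?c [0..<length w] ! 0) * (\<Prod>k<length (map ?c [0..<length w]) - 1.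
          Qmat P (map ?c [0..<length w] ! k) (map ?c [0..<length w] ! Suc k)))"
    using mC unfolding markov_measure_def by blast
  also have "\<dots> = ennreal (ppi u * (\<Prod>k<length w - 1. P (w ! k) (w ! Suc k)))"
  proof -
    have "(\<Prod>k<length (map ?c [0..<length w]) - 1.
          Qmat P (map ?c [0..<length w] ! k) (map ?c [0..<length w] ! Suc k))
       = (\<Prod>k<length w - 1. P (w ! k) (w ! Suc k))"
    proof (rule prod.cong)
      fix k assume "k \<in> {..<length w - 1}"
      then have k: "k < length w" "Suc k < length w" by auto
      then show "Qmat P (map ?c [0..<length w] ! k) (map ?c [0..<length w] ! Suc k) = P (w ! k) (w ! Suc k)"
        using cp[OF k(1)] cp[OF k(2)] by (simp add: Qmat_def del: upt_Suc)
    qed simp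
    moreover have "map ?c [0..<length w] ! 0 = u" using w by (simp del: upt_Suc)
    ultimately show ?thesis by simp
  qed
  finally show ?thesis .
qed

theorem proposition3p2:
  fixes P :: "'x::finite \<Rightarrow> 'x \<Rightarrow> real"
    and p :: "'x \<Rightarrow> real"
    and mu :: "(nat \<Rightarrow> 'x) measure"
    and A :: "'x \<Rightarrow> real^2^2"
    and M :: "'x \<Rightarrow> complex set"
    and C :: "'x edge set"
    and pi :: "'x edge \<Rightarrow> real"
    and muC :: "(nat \<Rightarrow> 'x edge) measure"
  assumes "row_stochastic P"
    and "irreducible_on UNIV P"
    and "stationary_prob UNIV P p"
    and "markov_measure UNIV P p mu"
    and "\<forall>i. invertible (A i)"
    and "proj_unif_hyp P A"
    and "multicone P A M"
    and "recurrent_class P A M C"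
    and "stationary_prob C (Qmat P) pi"
    and "markov_measure C (Qmat P) pi muC"
  shows "vartheta ` shift_space C (Qmat P) = shift_space UNIV P
       \<and> vartheta \<in> measurable muC mu
       \<and> distr muC mu vartheta = mu"
proof -
  note rs = assms(1) and irr = assms(2) and pst = assms(3) and mmu = assms(4)
    and rc = assms(8) and pist = assms(9) and mC = assms(10)
  define \<Omega> where "\<Omega> = shift_space UNIV P"
  have surj: "vartheta ` shift_space C (Qmat P) = \<Omega>"
    unfolding \<Omega>_def by (rule surj_part[OF rc irr])
  have Pnn: "\<And>i j. 0 \<le> P i j" using rs by (auto simp: row_stochastic_def)
  have pinn: "\<And>r. r \<in> C \<Longrightarrow> 0 \<le> pi r" using pist unfolding stationary_prob_def by blast
  have pnn: "\<And>j. 0 \<le> p j" and p1: "(\<Sum>j\<in>UNIV. p j) = 1" using pst unfolding stationary_prob_def by blast+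
  have smu: "sets mu = sets (shift_mspace UNIV P)" using mmu by (simp add: markov_measure_def)
  have smuC: "sets muC = sets (shift_mspace C (Qmat P))" using mC by (simp add: markov_measure_def)
  have spmuC: "space muC = shift_space C (Qmat P)"
    using sets_eq_imp_space_eq[OF smuC] by simp
  have meas: "vartheta \<in> measurable muC mu"
    unfolding measurable_cong_sets[OF smuC smu] shift_mspace_def
    by (rule measurable_restrict_space3[OF vartheta_meas_PiM]) (use surj \<Omega>_def in blast)
  have qp: "(\<lambda>j. \<Sum>r\<in>{r\<in>C. tau r = j}. pi r) = p"
    by (rule stat_unique[OF rs irr q_stationary[OF rs rc pist] pst])
  have cylmu: "cylinder UNIV P w \<in> sets mu" for w using cyl_sets smu by blast
  have cyl_eq: "emeasure (distr muC mu vartheta) (cylinder UNIV P w) = emeasure mu (cylinder UNIV P w)"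
    if w: "w \<noteq> []" for w
  proof (cases "\<forall>k. Suc k < length w \<longrightarrow> 0 < P (w ! k) (w ! Suc k)")
    case adm: True
    define U where "U = {r\<in>C. tau r = w ! 0}"
    define PP where "PP = (\<Prod>k<length w - 1. P (w ! k) (w ! Suc k))"
    have finC: "finite C" using pist unfolding stationary_prob_def by (metis sum.infinite zero_neq_one)
    have finU: "finite U" using finC by (simp add: U_def)
    have "emeasure (distr muC mu vartheta) (cylinder UNIV P w)
        = emeasure muC (vartheta -` cylinder UNIV P w \<inter> space muC)"
      by (rule emeasure_distr[OF meas cylmu])
    also have "\<dots> = emeasure muC (\<Union>u\<in>U. cylinder C (Qmat P) (map (chainf A M u w) [0..<length w]))"
      unfolding spmuC preimage[OF rc adm w] U_def ..
    also have "\<dots> = (\<Sum>u\<in>U. emeasure muC (cylinder C (Qmat P) (map (chainf A M u w) [0..<length w])))"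
    proof (rule sum_emeasure[symmetric])
      show "(\<lambda>u. cylinder C (Qmat P) (map (chainf A M u w) [0..<length w])) ` U \<subseteq> sets muC"
        using cyl_sets smuC by blast
      show "disjoint_family_on (\<lambda>u. cylinder C (Qmat P) (map (chainf A M u w) [0..<length w])) U"
        unfolding disjoint_family_on_def
      proof (intro ballI impI)
        fix u u' :: "'x edge" assume "u \<noteq> u'"
        have "x 0 = u" if "x \<in> cylinder C (Qmat P) (map (chainf A M u w) [0..<length w])" for x u
          using that w by (auto simp: cylinder_def simp del: upt_Suc)
        then show "cylinder C (Qmat P) (map (chainf A M u w) [0..<length w]) \<inter>
            cylinder C (Qmat P) (map (chainf A M u' w) [0..<length w]) = {}"
          using \<open>u \<noteq> u'\<close> by blast
      qed
    qed (rule finU)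
    also have "\<dots> = (\<Sum>u\<in>U. ennreal (pi u * PP))"
      by (rule sum.cong[OF refl]) (use emeas_chain[OF mC rc _ _ adm w] in \<open>auto simp: U_def PP_def\<close>)
    also have "\<dots> = ennreal (\<Sum>u\<in>U. pi u * PP)"
      proof (rule sum_ennreal)
      have "0 \<le> PP" unfolding PP_def by (intro prod_nonneg) (simp add: Pnn)
      then show "\<And>u. u \<in> U \<Longrightarrow> 0 \<le> pi u * PP" using pinn by (simp add: U_def)
    qed
    also have "\<dots> = ennreal (p (w ! 0) * PP)"
      using fun_cong[OF qp, of "w ! 0"] by (simp add: U_def sum_distrib_right[symmetric])
    also have "\<dots> = emeasure mu (cylinder UNIV P w)"
      using mmu w unfolding markov_measure_def PP_def by simp
    finally show ?thesis .
  next
    case False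
    then obtain k where k: "Suc k < length w" "\<not> 0 < P (w ! k) (w ! Suc k)" by auto
    have "cylinder UNIV P w = {}"
    proof (intro equalityI subsetI)
      fix x assume "x \<in> cylinder UNIV P w"
      then have xs: "\<forall>n. 0 < P (x n) (x (Suc n))" "\<forall>k<length w. x k = w ! k"
        by (auto simp: cylinder_def shift_space_def)
      have "x k = w ! k" using xs(2) k(1) by simp
      moreover have "x (Suc k) = w ! Suc k" using xs(2) k(1) by simp
      moreover have "0 < P (x k) (x (Suc k))" using xs(1) by blast
      ultimately have "0 < P (w ! k) (w ! Suc k)" by simp
      then show "x \<in> {}" using k by simp
    qed simp
    then show ?thesis by simp
  qed
  have Ounion: "\<Omega> = (\<Union>j\<in>UNIV. cylinder UNIV P [j])"
    by (auto simp: \<Omega>_def cylinder_def)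
  have Odisj: "disjoint_family_on (\<lambda>j. cylinder UNIV P [j]) UNIV"
    by (auto simp: disjoint_family_on_def cylinder_def)
  have Osum: "emeasure N \<Omega> = (\<Sum>j\<in>UNIV. emeasure N (cylinder UNIV P [j]))" if "sets N = sets mu" for N
    by (subst Ounion, rule sum_emeasure[symmetric]) (use that cylmu Odisj in auto)
  have Oeq: "emeasure (distr muC mu vartheta) \<Omega> = emeasure mu \<Omega>"
    using Osum[of mu] Osum[of "distr muC mu vartheta"] cyl_eq by simp
  have Ofin: "emeasure mu \<Omega> \<noteq> \<infinity>"
  proof -
    have "emeasure mu \<Omega> = (\<Sum>j\<in>UNIV. ennreal (p j))"
      using Osum[of mu] mmu by (simp add: markov_measure_def)
    also have "\<dots> = ennreal 1" using p1 pnn by (simp add: sum_ennreal)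
    finally show ?thesis by simp
  qed
  define E where "E = {cylinder UNIV P w | w. True} \<union> {{}}"
  have "distr muC mu vartheta = mu"
  proof (rule measure_eqI_generator_eq[where E=E and \<Omega>=\<Omega> and A="\<lambda>_. \<Omega>"])
    show "Int_stable E"
      unfolding Int_stable_def E_def
    proof (intro ballI)
      fix a b assume a: "a \<in> {cylinder UNIV P w | w. True} \<union> {{}}" and b: "b \<in> {cylinder UNIV P w | w. True} \<union> {{}}"
      show "a \<inter> b \<in> {cylinder UNIV P w | w. True} \<union> {{}}"
      proof (cases "a = {} \<or> b = {}")
        case True then show ?thesis by auto
      next
        case False
        then obtain u v where uv: "a = cylinder UNIV P u" "b = cylinder UNIV P v" using a b by auto
        show ?thesis
        proof (cases "length u \<le> length v")
          case True then show ?thesis using cyl_int[OF True, of UNIV P] uv by auto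
        next
          case False
          then have "length v \<le> length u" by simp
          then show ?thesis using cyl_int[of v u UNIV P] uv by (auto simp: Int_commute)
        qed
      qed
    qed
    show "E \<subseteq> Pow \<Omega>" by (auto simp: E_def \<Omega>_def cylinder_def)
    show "sets (distr muC mu vartheta) = sigma_sets \<Omega> E"
      using sets_gen[of P] smu by (simp add: E_def \<Omega>_def)
    show "sets mu = sigma_sets \<Omega> E"
      using sets_gen[of P] smu by (simp add: E_def \<Omega>_def)
    show "range (\<lambda>_. \<Omega>) \<subseteq> E" by (auto simp: E_def \<Omega>_def cylinder_def intro: exI[of _ "[]"])
    show "(\<Union>i. \<Omega>) = \<Omega>" by simp
    show "emeasure (distr muC mu vartheta) \<Omega> \<noteq> \<infinity>" using Oeq Ofin by simp
    fix X assume "X \<in> E"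
    then consider "X = {}" | w where "X = cylinder UNIV P w" by (auto simp: E_def)
    then show "emeasure (distr muC mu vartheta) X = emeasure mu X"
    proof cases
      case 1 then show ?thesis by simp
    next
      case (2 w)
      show ?thesis
      proof (cases "w = []")
        case True
        then have "X = \<Omega>" using 2 by (simp add: cylinder_def \<Omega>_def)
        then show ?thesis using Oeq by simp
      next
        case False then show ?thesis using cyl_eq 2 by simp
      qed
    qed
  qed
  then show ?thesis using surj meas \<Omega>_def by simp
qed

end
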